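(* Let $c\ge2$, $d\ge c$. Let $\mathbb E\Gamma=[\mathbb E\gamma_1,\dots,\mathbb E\gamma_c]\in\mathbb R^{d\times c}$ and server vectors $\gamma_1,\dots,\gamma_c\in\mathbb R^d$, let $\hat{\mathcal P}$ be an affine subspace of $\mathbb R^d$, $\Pi_{\hat{\mathcal P}}(\Gamma)=[\Pi_{\hat{\mathcal P}}(\gamma_1),\dots,\Pi_{\hat{\mathcal P}}(\gamma_c)]$ and $\Delta\Gamma=\Pi_{\hat{\mathcal P}}(\Gamma)-\mathbb E\Gamma$. Assume the $(c-1)$-th largest singular value of $\mathbb E\Gamma\,(I-\frac1c\mathbf 1\mathbf 1^\top)$ is at least $\sigma_s$, and that $\|\Delta\Gamma\|_2<\sigma_s$ (spectral norm). Let $g_h\in\mathbb R^d$ and $\mathbb Eg_h\in\mathbb R^d$, let $p_h\in\mathbb R^c$ be a probability vector with $\mathbb E\Gamma\,p_h=\mathbb Eg_h$, and let $\hat p_h\in\mathbb R^c$ satisfy $\Pi_{\hat{\mathcal P}}(\Gamma)\hat p_h=\Pi_{\hat{\mathcal P}}(g_h)$ and $\mathbf 1^\top\hat p_h=1$. Writing $\Delta g_h=\Pi_{\hat{\mathcal P}}(g_h)-\mathbb Eg_h$, $$\|\hat p_h-p_h\|_2\le\frac{\|\Delta g_h\|_2+\sqrt2\,\|\Delta\Gamma\|_2}{\sigma_s-\|\Delta\Gamma\|_2}.$$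
   Context: For an affine subspace $\mathcal P=\{U\lambda+m\}$ ($U$ with orthonormal columns), $\Pi_{\mathcal P}(w)=UU^\top(w-m)+m$ is its orthogonal projection. $\mathbf 1\in\mathbb R^c$ is the all-ones vector. *)

theory Defs
  imports "HOL-Analysis.Analysis" "HOL-Computational_Algebra.Polynomial"
begin

definition charpoly :: "real^'n^'n \<Rightarrow> real poly" where
  "charpoly M = det (\<chi> i j. (if i = j then [:0, 1:] else 0) - [:M $ i $ j:])"

definition eigenvalues_desc :: "real^'n^'n \<Rightarrow> real list" where
  "eigenvalues_desc M = rev (sorted_list_of_multiset (proots (charpoly M)))"

text \<open>k-th largest singular value (k counted from 1) of a matrix A:
  square root of the k-th largest eigenvalue of A^T A.\<close>
definition singular_value :: "real^'c^'d \<Rightarrow> nat \<Rightarrow> real" where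
  "singular_value A k = sqrt (eigenvalues_desc (transpose A ** A) ! (k - 1))"

definition spec_norm :: "real^'c^'d \<Rightarrow> real" where
  "spec_norm A = onorm (\<lambda>x. A *v x)"

text \<open>Orthogonal projection onto the affine subspace {U \<lambda> + m}, U with orthonormal columns.\<close>
definition aff_proj :: "real^'k^'d \<Rightarrow> real^'d \<Rightarrow> real^'d \<Rightarrow> real^'d" where
  "aff_proj U m w = U *v (transpose U *v (w - m)) + m"

definition aff_proj_mat :: "real^'k^'d \<Rightarrow> real^'d \<Rightarrow> real^'c^'d \<Rightarrow> real^'c^'d" where
  "aff_proj_mat U m G = (\<chi> i j. aff_proj U m (column j G) $ i)"

definition centering :: "real^'c^'c" where
  "centering = mat 1 - (\<chi> i j. 1 / real CARD('c))"

end

theory Submission imports Defs begin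

lemma quad_zero:
  fixes a b :: real
  assumes "\<And>t. 2*t*a + t^2*b \<le> 0"
  shows "a = 0"
proof (rule ccontr)
  assume a: "a \<noteq> 0"
  define D where "D = 1 + \<bar>b\<bar>"
  have D: "D > 0" "2*D + b > 0" unfolding D_def by auto
  define t where "t = a / D"
  have "2*t*a + t^2*b = a^2*(2*D+b)/D^2"
    using D by (simp add: t_def power2_eq_square field_simps)
  moreover have "a^2*(2*D+b)/D^2 > 0" using a D by (intro divide_pos_pos mult_pos_pos) auto
  moreover have "2*t*a + t^2*b \<le> 0" by (rule assms)
  ultimately show False by linarith
qed

lemma eigvec_exists:
  fixes f :: "'a::euclidean_space \<Rightarrow> 'a"
  assumes lin: "linear f" and sa: "\<And>x y. f x \<bullet> y = x \<bullet> f y"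
    and S: "subspace S" "f ` S \<subseteq> S" "S \<noteq> {0}"
  shows "\<exists>v\<in>S. norm v = 1 \<and> f v = (v \<bullet> f v) *\<^sub>R v"
proof -
  define K where "K = S \<inter> sphere 0 1"
  have "compact K" unfolding K_def
    using closed_subspace[OF S(1)] compact_sphere closed_Int_compact by blast
  moreover obtain x where x: "x \<in> S" "x \<noteq> 0" using S(1,3) subspace_0 by blast
  hence "x /\<^sub>R norm x \<in> K" unfolding K_def using S(1) subspace_scale by auto
  hence "K \<noteq> {}" by blast
  moreover have "continuous_on K (\<lambda>x. x \<bullet> f x)"
    by (intro continuous_intros linear_continuous_on linear_conv_bounded_linear[THEN iffD1] lin)
  ultimately obtain v where vK: "v \<in> K" and vmax: "\<And>y. y \<in> K \<Longrightarrow> y \<bullet> f y \<le> v \<bullet> f v"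
    using continuous_attains_sup by metis
  define l where "l = v \<bullet> f v"
  have vS: "v \<in> S" and vn: "norm v = 1" using vK unfolding K_def by auto
  have vv: "v \<bullet> v = 1" using vn by (simp add: norm_eq_1)
  have le: "x \<bullet> f x \<le> l * (x \<bullet> x)" if "x \<in> S" for x
  proof (cases "x = 0")
    case True then show ?thesis using linear_0[OF lin] by simp
  next
    case False
    hence "x /\<^sub>R norm x \<in> K" unfolding K_def using that S(1) subspace_scale by auto
    hence "(x /\<^sub>R norm x) \<bullet> f (x /\<^sub>R norm x) \<le> l" using vmax l_def by blast
    hence "(x \<bullet> f x) / (norm x)^2 \<le> l"
      by (simp add: linear_scale[OF lin] power2_eq_square divide_simps)
    moreover have "(norm x)^2 = x \<bullet> x" by (simp add: power2_norm_eq_inner)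
    moreover have "x \<bullet> x > 0" using False by simp
    ultimately show ?thesis by (simp add: divide_le_eq mult.commute)
  qed
  have orth: "w \<bullet> (f v - l *\<^sub>R v) = 0" if wS: "w \<in> S" for w
  proof -
    have "2*t*(w \<bullet> (f v - l *\<^sub>R v)) + t^2*(w \<bullet> f w - l * (w \<bullet> w)) \<le> 0" for t
    proof -
      have "v + t *\<^sub>R w \<in> S" using S(1) vS wS subspace_add subspace_scale by blast
      from le[OF this] have "(v + t *\<^sub>R w) \<bullet> f (v + t *\<^sub>R w) \<le> l * ((v + t *\<^sub>R w) \<bullet> (v + t *\<^sub>R w))" .
      moreover have "v \<bullet> f w = w \<bullet> f v" using sa[of v w] by (simp add: inner_commute)
      ultimately show ?thesis
        by (simp add: linear_add[OF lin] linear_scale[OF lin] inner_add inner_commute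
            power2_eq_square algebra_simps vv l_def)
    qed
    thus ?thesis by (rule quad_zero)
  qed
  have "f v - l *\<^sub>R v \<in> S" using S vS subspace_diff subspace_scale by blast
  from orth[OF this] have "f v = l *\<^sub>R v" by simp
  thus ?thesis using vS vn l_def by blast
qed

lemma spectral_sub:
  fixes f :: "'a::euclidean_space \<Rightarrow> 'a"
  assumes lin: "linear f" and sa: "\<And>x y. f x \<bullet> y = x \<bullet> f y"
  shows "subspace S \<Longrightarrow> f ` S \<subseteq> S \<Longrightarrow> \<exists>B. B \<subseteq> S \<and> pairwise orthogonal B \<and>
     (\<forall>b\<in>B. norm b = 1 \<and> f b = (b \<bullet> f b) *\<^sub>R b) \<and> span B = S"
proof (induction "dim S" arbitrary: S rule: less_induct)
  case (less S)
  show ?case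
  proof (cases "S = {0}")
    case True then show ?thesis by (intro exI[of _ "{}"]) auto
  next
    case False
    then obtain v where vS: "v \<in> S" and vn: "norm v = 1" and fv: "f v = (v \<bullet> f v) *\<^sub>R v"
      using eigvec_exists[OF lin sa less.prems] by blast
    define S' where "S' = S \<inter> {x. v \<bullet> x = 0}"
    have sub': "subspace S'" unfolding S'_def
      by (rule subspace_inter[OF less.prems(1) subspace_hyperplane])
    have inv': "f ` S' \<subseteq> S'"
    proof
      fix y assume "y \<in> f ` S'"
      then obtain x where x: "x \<in> S'" "y = f x" by blast
      have "v \<bullet> f x = f v \<bullet> x" using sa[of v x] by simp
      also have "\<dots> = (v \<bullet> f v) * (v \<bullet> x)" using fv by (metis inner_scaleR_left)
      also have "\<dots> = 0" using x unfolding S'_def by simp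
      finally show "y \<in> S'" using x less.prems(2) unfolding S'_def by auto
    qed
    have vv: "v \<bullet> v = 1" using vn by (simp add: norm_eq_1)
    have "S' \<subseteq> S" unfolding S'_def by blast
    moreover have "v \<notin> S'" unfolding S'_def using vv by simp
    ultimately have psub: "S' \<subset> S" using vS by blast
    have e1: "span S' = S'" using sub' by (simp add: span_eq_iff)
    have e2: "span S = S" using less.prems(1) by (simp add: span_eq_iff)
    have "span S' \<subset> span S" unfolding e1 e2 by (rule psub)
    hence "dim S' < dim S" by (rule dim_psubset)
    from less.hyps[OF this sub' inv'] obtain B' where B': "B' \<subseteq> S'" "pairwise orthogonal B'"
      "\<forall>b\<in>B'. norm b = 1 \<and> f b = (b \<bullet> f b) *\<^sub>R b" "span B' = S'" by blast
    have "pairwise orthogonal (insert v B')"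
    proof -
      have "orthogonal v y \<and> orthogonal y v" if "y \<in> B'" for y
      proof -
        have "v \<bullet> y = 0" using B'(1) that unfolding S'_def by blast
        thus ?thesis by (simp add: orthogonal_def inner_commute)
      qed
      thus ?thesis using B'(2) by (simp add: pairwise_insert)
    qed
    moreover have "insert v B' \<subseteq> S" using B'(1) vS unfolding S'_def by auto
    moreover have "span (insert v B') = S"
    proof
      show "span (insert v B') \<subseteq> S"
        using \<open>insert v B' \<subseteq> S\<close> less.prems(1) span_minimal by blast
      show "S \<subseteq> span (insert v B')"
      proof
        fix x assume xS: "x \<in> S"
        have "x - (v \<bullet> x) *\<^sub>R v \<in> S"
          using xS vS less.prems(1) by (simp add: subspace_diff subspace_scale)
        moreover have "v \<bullet> (x - (v \<bullet> x) *\<^sub>R v) = 0" using vv by (simp add: inner_diff_right)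
        ultimately have "x - (v \<bullet> x) *\<^sub>R v \<in> S'" unfolding S'_def by simp
        hence "x - (v \<bullet> x) *\<^sub>R v \<in> span (insert v B')"
          using B'(4) span_mono[of B' "insert v B'"] by blast
        moreover have "(v \<bullet> x) *\<^sub>R v \<in> span (insert v B')"
          by (simp add: span_base span_scale)
        ultimately have "(x - (v \<bullet> x) *\<^sub>R v) + (v \<bullet> x) *\<^sub>R v \<in> span (insert v B')"
          by (rule span_add)
        thus "x \<in> span (insert v B')" by simp
      qed
    qed
    moreover have "\<forall>b\<in>insert v B'. norm b = 1 \<and> f b = (b \<bullet> f b) *\<^sub>R b"
      using B'(3) vn fv by blast
    ultimately show ?thesis by blast
  qed
qed


lemma mv_sym:
  fixes T :: "real^'c^'d"
  shows "((transpose T ** T) *v x) \<bullet> y = (T *v x) \<bullet> (T *v y)"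
proof -
  have "(transpose T ** T) *v x = transpose T *v (T *v x)" by (simp add: matrix_vector_mul_assoc)
  thus ?thesis by (simp add: dot_lmul_matrix)
qed

lemma poly_det:
  fixes A :: "real poly^'n^'n"
  shows "poly (det A) x = det (\<chi> i j. poly (A$i$j) x)"
  unfolding det_def by (simp add: poly_sum poly_prod)

lemma transpose_mult_dot_column:
  fixes A B :: "real^'n^'m"
  shows "(transpose A ** B) $ i $ j = column i A \<bullet> column j B"
  by (simp add: matrix_matrix_mult_def transpose_def column_def inner_vec_def)

lemma column_mult:
  fixes A :: "real^'n^'m" and B :: "real^'k^'n"
  shows "column j (A ** B) = A *v column j B"
  by (simp add: column_def matrix_matrix_mult_def matrix_vector_mult_def vec_eq_iff)

lemma charpoly_eq:
  fixes M :: "real^'n^'n" and \<phi> :: "'n \<Rightarrow> real^'n" and \<mu> :: "'n \<Rightarrow> real"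
  assumes on: "\<And>i j. \<phi> i \<bullet> \<phi> j = (if i = j then 1 else 0)"
    and ev: "\<And>i. M *v \<phi> i = \<mu> i *\<^sub>R \<phi> i"
  shows "charpoly M = (\<Prod>i\<in>UNIV. [:- \<mu> i, 1:])"
proof -
  define P where "P = (\<chi> i j. \<phi> j $ i)"
  have colP: "column j P = \<phi> j" for j by (simp add: P_def column_def vec_eq_iff)
  have PtP: "transpose P ** P = mat 1"
    by (simp add: vec_eq_iff transpose_mult_dot_column colP on mat_def)
  have dP: "det P * det P = 1" using det_mul[of "transpose P" P] PtP by simp
  have "poly (charpoly M) x = poly (\<Prod>i\<in>UNIV. [:- \<mu> i, 1:]) x" for x
  proof -
    define N where "N = x *\<^sub>R (mat 1 :: real^'n^'n) - M"
    have "poly (charpoly M) x = det N"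
      unfolding charpoly_def poly_det N_def
      by (intro arg_cong[where f=det]) (simp add: vec_eq_iff mat_def)
    have NP: "N *v \<phi> j = (x - \<mu> j) *\<^sub>R \<phi> j" for j
      by (simp add: N_def matrix_vector_mult_diff_rdistrib ev scaleR_matrix_vector_assoc[symmetric]
          algebra_simps)
    have D: "(transpose P ** (N ** P)) $ i $ j = (if i = j then x - \<mu> j else 0)" for i j
      by (simp add: transpose_mult_dot_column column_mult colP NP on)
    have "det (transpose P ** (N ** P)) = det P * det N * det P"
      by (simp add: det_mul)
    also have "\<dots> = det N" using dP by (simp add: algebra_simps)
    finally have "det N = (\<Prod>i\<in>UNIV. x - \<mu> i)"
      using det_diagonal[of "transpose P ** (N ** P)"] D by simp
    thus ?thesis using \<open>poly (charpoly M) x = det N\<close> by (simp add: poly_prod)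
  qed
  hence "poly (charpoly M) = poly (\<Prod>i\<in>UNIV. [:- \<mu> i, 1:])" by (rule ext)
  thus ?thesis by (simp only: poly_eq_poly_eq_iff)
qed

lemma proots_charpoly:
  fixes M :: "real^'n^'n" and \<phi> :: "'n \<Rightarrow> real^'n" and \<mu> :: "'n \<Rightarrow> real"
  assumes on: "\<And>i j. \<phi> i \<bullet> \<phi> j = (if i = j then 1 else 0)"
    and ev: "\<And>i. M *v \<phi> i = \<mu> i *\<^sub>R \<phi> i"
  shows "proots (charpoly M) = (\<Sum>i\<in>UNIV. {# \<mu> i #})"
  unfolding charpoly_eq[OF on ev] by (subst proots_prod) auto

lemma size_sum_single: "finite A \<Longrightarrow> size (\<Sum>i\<in>A. {# f i #}) = card A"
  by (induction A rule: finite_induct) auto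

lemma set_sum_single: "finite A \<Longrightarrow> set_mset (\<Sum>i\<in>A. {# f i #}) = f ` A"
  by (induction A rule: finite_induct) auto

lemma second_smallest:
  fixes \<mu> :: "'n::finite \<Rightarrow> real"
  assumes c2: "CARD('n) \<ge> 2" and z: "\<mu> i0 = 0" and nn: "\<And>i. \<mu> i \<ge> 0" and j: "j \<noteq> i0"
  shows "rev (sorted_list_of_multiset (\<Sum>i\<in>UNIV. {#\<mu> i#})) ! (CARD('n) - 2) \<le> \<mu> j"
proof -
  define R' where "R' = (\<Sum>i\<in>UNIV-{i0}. {#\<mu> i#})"
  have R: "(\<Sum>i\<in>UNIV. {#\<mu> i#}) = add_mset 0 R'"
    unfolding R'_def using z by (subst sum.remove[of UNIV i0]) auto
  define xs where "xs = sorted_list_of_multiset R'"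
  have sx: "set xs = \<mu> ` (UNIV - {i0})" unfolding xs_def R'_def by (simp add: set_sum_single)
  have "length xs = size R'" by (metis mset_sorted_list_of_multiset size_mset xs_def)
  also have "\<dots> = CARD('n) - 1" unfolding R'_def by (simp add: size_sum_single card_Diff_singleton)
  finally have lx: "length xs = CARD('n) - 1" .
  have srt: "sorted xs" unfolding xs_def by simp
  have "sorted_list_of_multiset (add_mset 0 R') = 0 # xs"
    unfolding xs_def sorted_list_of_multiset_insert
    using nn by (intro insort_is_Cons) (auto simp: R'_def set_sum_single)
  hence "rev (sorted_list_of_multiset (\<Sum>i\<in>UNIV. {#\<mu> i#})) ! (CARD('n) - 2) = rev xs ! (CARD('n) - 2)"
    using R lx c2 by (simp add: nth_append)
  also have "\<dots> = xs ! 0" using lx c2 by (simp add: rev_nth)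
  also have "\<dots> \<le> \<mu> j"
  proof -
    have "\<mu> j \<in> set xs" using sx j by auto
    then obtain k where "k < length xs" "xs ! k = \<mu> j" by (auto simp: in_set_conv_nth)
    thus ?thesis using srt sorted_nth_mono[of xs 0 k] by auto
  qed
  finally show ?thesis .
qed

lemma key:
  fixes T :: "real^'c^'d" and q :: "real^'c"
  assumes c2: "CARD('c) \<ge> 2" and T1: "T *v (\<chi> i. 1) = 0" and q: "sum (\<lambda>i. q$i) UNIV = 0"
  shows "eigenvalues_desc (transpose T ** T) ! (CARD('c) - 2) * (norm q)^2 \<le> (norm (T *v q))^2"
proof -
  define M where "M = transpose T ** T"
  define one :: "real^'c" where "one = (\<chi> i. 1)"
  define f where "f = (\<lambda>x. M *v x)"
  have lin: "linear f" unfolding f_def by simp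
  have sa: "f x \<bullet> y = x \<bullet> f y" for x y
    unfolding f_def M_def by (metis mv_sym inner_commute)
  have Mform: "x \<bullet> (M *v x) = (T *v x) \<bullet> (T *v x)" for x
    unfolding M_def by (metis mv_sym inner_commute)
  have Mone: "M *v one = 0"
    unfolding M_def one_def by (simp add: matrix_vector_mul_assoc[symmetric] T1)
  define S where "S = {x. one \<bullet> x = 0}"
  have subS: "subspace S" unfolding S_def by (rule subspace_hyperplane)
  have invS: "f ` S \<subseteq> S"
  proof
    fix y assume "y \<in> f ` S"
    then obtain x where x: "x \<in> S" "y = f x" by blast
    have "one \<bullet> f x = f one \<bullet> x" using sa[of one x] by simp
    also have "\<dots> = 0" by (simp add: f_def Mone)
    finally show "y \<in> S" using x unfolding S_def by simp
  qed
  obtain B where B: "B \<subseteq> S" "pairwise orthogonal B"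
      "\<forall>b\<in>B. norm b = 1 \<and> f b = (b \<bullet> f b) *\<^sub>R b" "span B = S"
    using spectral_sub[OF lin sa subS invS] by blast
  have oo: "one \<bullet> one = real CARD('c)" by (simp add: one_def inner_vec_def)
  have no: "norm one = sqrt (real CARD('c))" by (simp add: norm_eq_sqrt_inner oo)
  have nopos: "norm one > 0" using no c2 by simp
  define u where "u = one /\<^sub>R norm one"
  have nu: "norm u = 1" unfolding u_def using nopos by simp
  have uone: "u \<bullet> one = norm one" unfolding u_def using nopos
    by (simp add: power2_norm_eq_inner[symmetric] power2_eq_square)
  have fu: "f u = 0" unfolding u_def using linear_scale[OF lin, of "inverse (norm one)" one]
    by (simp add: f_def Mone)
  have uB: "u \<notin> B" using B(1) uone nopos unfolding S_def by (auto simp: inner_commute)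
  define Bf where "Bf = insert u B"
  have orthB: "u \<bullet> b = 0" if "b \<in> B" for b
    using B(1) that unfolding S_def u_def by auto
  have pw: "pairwise orthogonal Bf" unfolding Bf_def using B(2) orthB
    by (auto simp: pairwise_insert orthogonal_def inner_commute)
  have nz: "0 \<notin> Bf" unfolding Bf_def using nu B(3) by auto
  have ind: "independent Bf" by (rule pairwise_orthogonal_independent[OF pw nz])
  have spanBf: "span Bf = UNIV"
  proof -
    have "x \<in> span Bf" for x
    proof -
      have "one \<bullet> (x - (u \<bullet> x) *\<^sub>R u) = 0"
      proof -
        have ou: "one \<bullet> u = norm one" using uone by (simp add: inner_commute)
        have ux: "u \<bullet> x = inverse (norm one) * (one \<bullet> x)" by (simp add: u_def)
        have "one \<bullet> (x - (u \<bullet> x) *\<^sub>R u) = one \<bullet> x - (u \<bullet> x) * norm one"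
          by (simp add: inner_diff_right ou)
        also have "\<dots> = 0" unfolding ux using nopos by simp
        finally show ?thesis .
      qed
      hence "x - (u \<bullet> x) *\<^sub>R u \<in> span B" using B(4) unfolding S_def by simp
      hence "x - (u \<bullet> x) *\<^sub>R u \<in> span Bf" unfolding Bf_def using span_mono[of B "insert u B"] by blast
      moreover have "(u \<bullet> x) *\<^sub>R u \<in> span Bf" unfolding Bf_def by (simp add: span_base span_scale)
      ultimately have "(x - (u \<bullet> x) *\<^sub>R u) + (u \<bullet> x) *\<^sub>R u \<in> span Bf" by (rule span_add)
      thus ?thesis by simp
    qed
    thus ?thesis by auto
  qed
  have cardBf: "card Bf = CARD('c)"
    using dim_span_eq_card_independent[OF ind] spanBf by simp
  have "card Bf > 0" using cardBf by simp
  hence finBf: "finite Bf" using card_gt_0_iff by blast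
  have "\<exists>h. bij_betw h (UNIV :: 'c set) Bf"
    by (rule finite_same_card_bij[OF finite_class.finite_UNIV finBf]) (simp add: cardBf)
  then obtain \<phi> where bij: "bij_betw \<phi> (UNIV :: 'c set) Bf" by blast
  have \<phi>in: "\<phi> i \<in> Bf" for i using bij by (auto simp: bij_betw_def)
  have unitBf: "norm b = 1 \<and> f b = (b \<bullet> f b) *\<^sub>R b" if "b \<in> Bf" for b
    using that B(3) nu fu unfolding Bf_def by auto
  have on: "\<phi> i \<bullet> \<phi> j = (if i = j then 1 else 0)" for i j
  proof (cases "i = j")
    case True thus ?thesis using unitBf[OF \<phi>in] by (simp add: norm_eq_1)
  next
    case False
    hence "\<phi> i \<noteq> \<phi> j" using bij by (auto simp: bij_betw_def inj_on_def)
    thus ?thesis using pw \<phi>in False by (auto simp: pairwise_def orthogonal_def)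
  qed
  define \<mu> where "\<mu> i = \<phi> i \<bullet> (M *v \<phi> i)" for i
  have ev: "M *v \<phi> i = \<mu> i *\<^sub>R \<phi> i" for i
    using unitBf[OF \<phi>in] unfolding \<mu>_def f_def by auto
  have pr: "proots (charpoly M) = (\<Sum>i\<in>UNIV. {# \<mu> i #})" by (rule proots_charpoly[OF on ev])
  have "u \<in> \<phi> ` UNIV" using bij unfolding Bf_def bij_betw_def by simp
  then obtain i0 where i0: "\<phi> i0 = u" by blast
  have z: "\<mu> i0 = 0" unfolding \<mu>_def i0 using fu by (simp add: f_def)
  have nn: "\<mu> i \<ge> 0" for i unfolding \<mu>_def Mform by simp
  define l where "l = eigenvalues_desc M ! (CARD('c) - 2)"
  have lB: "l \<le> b \<bullet> (M *v b)" if "b \<in> B" for b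
  proof -
    have "b \<in> Bf" using that Bf_def by simp
    hence "b \<in> \<phi> ` UNIV" using bij unfolding bij_betw_def by simp
    then obtain j where j: "\<phi> j = b" by blast
    have "j \<noteq> i0" using j i0 uB that by auto
    hence "l \<le> \<mu> j" unfolding l_def eigenvalues_desc_def pr
      by (rule second_smallest[of \<mu> i0 j, OF c2 z nn])
    thus ?thesis using j \<mu>_def by simp
  qed
  have finB: "finite B" using finBf Bf_def by simp
  have ortho: "b \<bullet> b' = (if b = b' then 1 else 0)" if "b \<in> B" "b' \<in> B" for b b'
    using B(2,3) that by (auto simp: pairwise_def orthogonal_def norm_eq_1)
  have qS: "q \<in> S" unfolding S_def one_def using q by (simp add: inner_vec_def)
  define r where "r = q - (\<Sum>b\<in>B. (b \<bullet> q) *\<^sub>R b)"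
  have r0: "r = 0"
  proof -
    have "r \<in> span B" unfolding r_def using qS B(4)
      by (intro span_diff) (auto intro: span_sum span_scale span_base)
    moreover have "orthogonal r b" if "b \<in> B" for b
    proof -
      have "(\<Sum>b'\<in>B. (b' \<bullet> q) *\<^sub>R b') \<bullet> b = (\<Sum>b'\<in>B. (b' \<bullet> q) * (b' \<bullet> b))"
        by (simp add: inner_sum_left)
      also have "\<dots> = (\<Sum>b'\<in>B. (if b' = b then b' \<bullet> q else 0))"
        using ortho that by (intro sum.cong) auto
      also have "\<dots> = b \<bullet> q" using finB that by simp
      finally have e: "(\<Sum>b'\<in>B. (b' \<bullet> q) *\<^sub>R b') \<bullet> b = b \<bullet> q" .
      show ?thesis unfolding r_def orthogonal_def inner_diff_left e by (simp add: inner_commute)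
    qed
    ultimately have "orthogonal r r" using orthogonal_to_span by blast
    thus ?thesis by (simp add: orthogonal_def)
  qed
  hence qexp: "q = (\<Sum>b\<in>B. (b \<bullet> q) *\<^sub>R b)" unfolding r_def by simp
  have Mq: "M *v q = (\<Sum>b\<in>B. ((b \<bullet> q) * (b \<bullet> (M *v b))) *\<^sub>R b)"
  proof -
    have "M *v q = f (\<Sum>b\<in>B. (b \<bullet> q) *\<^sub>R b)" using qexp f_def by metis
    also have "\<dots> = (\<Sum>b\<in>B. (b \<bullet> q) *\<^sub>R f b)" by (simp add: linear_sum[OF lin] linear_scale[OF lin])
    also have "\<dots> = (\<Sum>b\<in>B. ((b \<bullet> q) * (b \<bullet> (M *v b))) *\<^sub>R b)"
    proof (intro sum.cong refl)
      fix b assume "b \<in> B"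
      hence hb: "f b = (b \<bullet> f b) *\<^sub>R b" using B(3) by blast
      have "(b \<bullet> q) *\<^sub>R f b = (b \<bullet> q) *\<^sub>R ((b \<bullet> f b) *\<^sub>R b)" using hb by metis
      also have "\<dots> = ((b \<bullet> q) * (b \<bullet> f b)) *\<^sub>R b" by simp
      finally show "(b \<bullet> q) *\<^sub>R f b = ((b \<bullet> q) * (b \<bullet> (M *v b))) *\<^sub>R b"
        by (simp add: f_def)
    qed
    finally show ?thesis .
  qed
  have qMq: "q \<bullet> (M *v q) = (\<Sum>b\<in>B. (b \<bullet> q)^2 * (b \<bullet> (M *v b)))"
    unfolding Mq by (simp add: inner_sum_right power2_eq_square inner_commute algebra_simps)
  have qq: "q \<bullet> q = (\<Sum>b\<in>B. (b \<bullet> q)^2)"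
    by (subst (2) qexp) (simp add: inner_sum_right power2_eq_square inner_commute)
  have "l * (q \<bullet> q) = (\<Sum>b\<in>B. (b \<bullet> q)^2 * l)" unfolding qq by (simp add: sum_distrib_left mult.commute)
  also have "\<dots> \<le> (\<Sum>b\<in>B. (b \<bullet> q)^2 * (b \<bullet> (M *v b)))"
    using lB by (intro sum_mono mult_left_mono) auto
  also have "\<dots> = (T *v q) \<bullet> (T *v q)" using qMq Mform by simp
  finally show ?thesis unfolding l_def M_def by (simp add: power2_norm_eq_inner)
qed

lemma spec_bound:
  fixes D :: "real^'c^'d"
  shows "norm (D *v x) \<le> spec_norm D * norm x" and "spec_norm D \<ge> 0"
  unfolding spec_norm_def
  using onorm[of "(*v) D" x] onorm_pos_le[of "(*v) D"] by auto

lemma centering_mv: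
  fixes x :: "real^'c"
  shows "centering *v x = x - ((\<Sum>j\<in>UNIV. x$j) / real CARD('c)) *\<^sub>R (\<chi> i. 1)"
proof -
  have d: "(\<Sum>j\<in>UNIV. (if i = j then 1 else 0) * x $ j) = x $ i" for i :: 'c
  proof -
    have "(\<Sum>j\<in>UNIV. (if i = j then 1 else 0) * x $ j) = (\<Sum>j\<in>UNIV. if i = j then x $ j else 0)"
      by (intro sum.cong) auto
    thus ?thesis by simp
  qed
  show ?thesis unfolding centering_def
  by (simp add: matrix_vector_mult_diff_rdistrib vec_eq_iff matrix_vector_mult_def sum_divide_distrib
      mat_def left_diff_distrib sum_subtractf d)
qed

lemma prob_norm:
  fixes p :: "real^'c"
  assumes "\<forall>i. p $ i \<ge> 0" and "sum (\<lambda>i. p $ i) UNIV = 1"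
  shows "norm p \<le> 1"
proof -
  have le1: "p $ i \<le> 1" for i
    using member_le_sum[of i UNIV "\<lambda>i. p $ i"] assms by auto
  have "p \<bullet> p = (\<Sum>i\<in>UNIV. p$i * p$i)" by (simp add: inner_vec_def)
  also have "\<dots> \<le> (\<Sum>i\<in>UNIV. p$i)"
    using assms le1 by (intro sum_mono) (simp add: mult_left_le)
  finally have "p \<bullet> p \<le> 1" using assms by simp
  thus ?thesis by (simp add: norm_eq_sqrt_inner)
qed

theorem mainTheorem11:
  fixes EG Gamma :: "real^'c^'d"
    and U :: "real^'k^'d" and m :: "real^'d"
    and sigma_s :: real
    and g_h Eg_h :: "real^'d"
    and p_h p_hat :: "real^'c"
  assumes "CARD('c) \<ge> 2" and "CARD('d) \<ge> CARD('c)"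
    and "transpose U ** U = mat 1"
    and "singular_value (EG ** centering) (CARD('c) - 1) \<ge> sigma_s"
    and "spec_norm (aff_proj_mat U m Gamma - EG) < sigma_s"
    and "\<forall>i. p_h $ i \<ge> 0" and "sum (\<lambda>i. p_h $ i) UNIV = 1"
    and "EG *v p_h = Eg_h"
    and "aff_proj_mat U m Gamma *v p_hat = aff_proj U m g_h"
    and "sum (\<lambda>i. p_hat $ i) UNIV = 1"
  shows "norm (p_hat - p_h) \<le>
    (norm (aff_proj U m g_h - Eg_h) + sqrt 2 * spec_norm (aff_proj_mat U m Gamma - EG))
      / (sigma_s - spec_norm (aff_proj_mat U m Gamma - EG))"
proof -
  define A where "A = aff_proj_mat U m Gamma"
  define D where "D = A - EG"
  define N where "N = spec_norm D"
  define q where "q = p_hat - p_h"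
  define dg where "dg = aff_proj U m g_h - Eg_h"
  have N0: "N \<ge> 0" unfolding N_def by (rule spec_bound(2))
  have Nlt: "N < sigma_s" using assms(5) unfolding N_def D_def A_def .
  have spos: "sigma_s > 0" using N0 Nlt by linarith
  have Eq: "EG *v q = dg - D *v p_hat"
    unfolding q_def dg_def D_def using assms(8,9) unfolding A_def[symmetric]
    by (simp add: matrix_vector_mult_diff_distrib matrix_vector_mult_diff_rdistrib)
  have qsum: "sum (\<lambda>i. q $ i) UNIV = 0"
    unfolding q_def using assms(7,10) by (simp add: sum_subtractf)
  define T where "T = EG ** centering"
  have T1: "T *v (\<chi> i. 1) = 0"
    unfolding T_def by (simp add: matrix_vector_mul_assoc[symmetric] centering_mv)
  have Tq: "T *v q = EG *v q"
    unfolding T_def by (simp add: matrix_vector_mul_assoc[symmetric] centering_mv qsum)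
  define l where "l = eigenvalues_desc (transpose T ** T) ! (CARD('c) - 2)"
  have kq: "l * (norm q)^2 \<le> (norm (EG *v q))^2"
    using key[OF assms(1) T1 qsum] unfolding l_def Tq .
  have "sigma_s \<le> sqrt l"
    using assms(4) unfolding singular_value_def T_def[symmetric] l_def
    using assms(1) by (simp add: numeral_2_eq_2 Suc_diff_Suc)
  hence sl: "sigma_s^2 \<le> l"
  proof -
    assume a: "sigma_s \<le> sqrt l"
    have l0: "l \<ge> 0"
    proof (rule ccontr)
      assume "\<not> l \<ge> 0" hence "sqrt l < 0" by simp
      thus False using a spos by linarith
    qed
    have "sigma_s^2 \<le> (sqrt l)^2" using a spos by (intro power_mono) auto
    thus ?thesis using l0 by simp
  qed
  have "(sigma_s * norm q)^2 \<le> (norm (EG *v q))^2"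
  proof -
    have "(sigma_s * norm q)^2 = sigma_s^2 * (norm q)^2" by (simp add: power_mult_distrib)
    also have "\<dots> \<le> l * (norm q)^2" using sl by (intro mult_right_mono) auto
    finally show ?thesis using kq by linarith
  qed
  hence s1: "sigma_s * norm q \<le> norm (EG *v q)"
    by (rule power2_le_imp_le) simp
  have "norm (EG *v q) \<le> norm dg + N * norm p_hat"
    unfolding Eq N_def using spec_bound(1)[of D p_hat] norm_triangle_ineq4[of dg "D *v p_hat"] by linarith
  moreover have "norm p_hat \<le> 1 + norm q"
  proof -
    have "p_hat = p_h + q" unfolding q_def by simp
    hence "norm p_hat \<le> norm p_h + norm q" by (metis norm_triangle_ineq)
    thus ?thesis using prob_norm[OF assms(6,7)] by linarith
  qed
  ultimately have "sigma_s * norm q \<le> norm dg + N * (1 + norm q)"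
    using s1 N0 mult_left_mono[of "norm p_hat" "1 + norm q" N] by linarith
  hence "(sigma_s - N) * norm q \<le> norm dg + N" by (simp add: algebra_simps)
  moreover have "N \<le> sqrt 2 * N" using N0 by (simp add: mult_le_cancel_right1)
  ultimately have "(sigma_s - N) * norm q \<le> norm dg + sqrt 2 * N" by linarith
  hence "norm q \<le> (norm dg + sqrt 2 * N) / (sigma_s - N)"
    using Nlt by (simp add: pos_le_divide_eq mult.commute)
  thus ?thesis unfolding q_def dg_def N_def D_def A_def .
qed

end
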